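(* There exists a polynomial $p$ such that for every sufficiently large natural number $n$ the following holds. Let $\alpha$ be an integer with $\alpha > 7 \log n + 6$, and let $(x_1, \ldots, x_t)$ be a tuple of strings in $\{0,1\}^n$ that is mutually $\alpha$-independent, i.e. $C(x_{\pi(1)} x_{\pi(2)} \cdots x_{\pi(t)}) \geq C(x_1) + \cdots + C(x_t) - \alpha$ for every permutation $\pi$ of $\{1,\ldots,t\}$. Then $t \leq p(n)\, 2^{\alpha}$.
   Context: $C(x)$ denotes the plain Kolmogorov complexity of the binary string $x$ with respect to a fixed universal Turing machine; juxtaposition of strings denotes concatenation. Logarithms are base $2$. *)

theory Defs
  imports Complex_Main "HOL-Computational_Algebra.Polynomial"
begin

datatype recf = Z | S | Proj nat | Comp recf "recf list" | Prec recf recf | Mn recf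

inductive eval :: "recf \<Rightarrow> nat list \<Rightarrow> nat \<Rightarrow> bool" where
  eval_Z: "eval Z xs 0"
| eval_S: "eval S (x # xs) (Suc x)"
| eval_Proj: "i < length xs \<Longrightarrow> eval (Proj i) xs (xs ! i)"
| eval_Comp: "list_all2 (\<lambda>g y. eval g xs y) gs ys \<Longrightarrow> eval f ys z \<Longrightarrow> eval (Comp f gs) xs z"
| eval_Prec0: "eval f xs y \<Longrightarrow> eval (Prec f g) (0 # xs) y"
| eval_PrecS: "eval (Prec f g) (n # xs) r \<Longrightarrow> eval g (n # r # xs) y \<Longrightarrow> eval (Prec f g) (Suc n # xs) y"
| eval_Mn: "eval f (y # xs) 0 \<Longrightarrow> (\<forall>z<y. \<exists>w. eval f (z # xs) (Suc w)) \<Longrightarrow> eval (Mn f) xs y"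

fun enc :: "bool list \<Rightarrow> nat" where
  "enc [] = 0"
| "enc (b # bs) = 2 * enc bs + (if b then 2 else 1)"

definition partial_computable :: "(bool list \<Rightarrow> bool list option) \<Rightarrow> bool" where
  "partial_computable F \<longleftrightarrow> (\<exists>f. \<forall>x y. F x = Some y \<longleftrightarrow> eval f [enc x] (enc y))"

definition universal :: "(bool list \<Rightarrow> bool list option) \<Rightarrow> bool" where
  "universal U \<longleftrightarrow> partial_computable U \<and>
     (\<forall>F. partial_computable F \<longrightarrow> (\<exists>q. \<forall>p. U (q @ p) = F p))"

definition KC :: "(bool list \<Rightarrow> bool list option) \<Rightarrow> bool list \<Rightarrow> nat" where
  "KC U x = (LEAST k. \<exists>p. length p = k \<and> U p = Some x)"

definition mutually_independent ::
  "(bool list \<Rightarrow> bool list option) \<Rightarrow> int \<Rightarrow> bool list list \<Rightarrow> bool" where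
  "mutually_independent U \<alpha> xs \<longleftrightarrow>
     (\<forall>\<pi>. bij_betw \<pi> {..<length xs} {..<length xs} \<longrightarrow>
        int (KC U (concat (map (\<lambda>i. xs ! \<pi> i) [0..<length xs])))
          \<ge> (\<Sum>i<length xs. int (KC U (xs ! i))) - \<alpha>)"

end

theory Submission
  imports Defs
begin


inductive_cases ZE: "eval Z xs y"
inductive_cases SE: "eval S xs y"
inductive_cases ProjE: "eval (Proj i) xs y"
inductive_cases CompE: "eval (Comp f gs) xs y"
inductive_cases PrecE: "eval (Prec f g) xs y"
lemma MnE: "eval (Mn f) xs y \<Longrightarrow> (eval f (y#xs) 0 \<Longrightarrow> \<forall>z<y. \<exists>w. eval f (z#xs) (Suc w) \<Longrightarrow> P) \<Longrightarrow> P"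
  by (erule eval.cases) blast+

lemma list_all2_det:
  "list_all2 (\<lambda>g y. eval g xs y \<and> (\<forall>y'. eval g xs y' \<longrightarrow> y = y')) gs ys
   \<Longrightarrow> list_all2 (\<lambda>g y. eval g xs y) gs ys' \<Longrightarrow> ys = ys'"
proof (induction gs ys arbitrary: ys' rule: list_all2_induct)
  case Nil thus ?case by simp
next
  case (Cons g gs y ys)
  then obtain y' ys'' where "ys' = y' # ys''" "eval g xs y'" "list_all2 (\<lambda>g y. eval g xs y) gs ys''"
    by (auto simp: list_all2_Cons1)
  thus ?case using Cons by auto
qed

lemma eval_det: "eval f xs y \<Longrightarrow> eval f xs y' \<Longrightarrow> y = y'"
proof (induction arbitrary: y' rule: eval.induct)
  case (eval_Z xs) from eval_Z show ?case by (rule ZE) simp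
next
  case (eval_S x xs) from eval_S show ?case by (rule SE) simp
next
  case (eval_Proj i xs) from eval_Proj(2) show ?case by (rule ProjE) simp
next
  case (eval_Comp xs gs ys f z)
  from eval_Comp.prems obtain ys' where a: "list_all2 (\<lambda>g y. eval g xs y) gs ys'" "eval f ys' y'"
    by (rule CompE) blast
  have h: "list_all2 (\<lambda>g y. eval g xs y \<and> (\<forall>y'. eval g xs y' \<longrightarrow> y = y')) gs ys"
    using eval_Comp.IH(1) by (rule list_all2_mono) blast
  have "ys = ys'" using list_all2_det[OF h a(1)] .
  thus ?case using eval_Comp.IH(2) a(2) by blast
next
  case (eval_Prec0 f xs y g) 
  from eval_Prec0.prems show ?case
    by (rule PrecE) (use eval_Prec0.IH in blast)+
next
  case (eval_PrecS f g n xs r y)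
  from eval_PrecS.prems obtain r' where "eval (Prec f g) (n # xs) r'" "eval g (n # r' # xs) y'"
    by (rule PrecE) blast+
  thus ?case using eval_PrecS.IH by metis
next
  case (eval_Mn f y xs)
  have b: "eval f (y' # xs) 0" "\<forall>z<y'. \<exists>w. eval f (z # xs) (Suc w)"
    using MnE[OF eval_Mn.prems] by blast+
  show ?case
  proof (rule linorder_cases[of y y'])
    assume "y < y'" then obtain w where "eval f (y # xs) (Suc w)" using b by blast
    with eval_Mn.IH(1) show ?thesis by blast
  next
    assume "y' < y" then obtain w where "eval f (y' # xs) (Suc w)"
      "\<forall>v. eval f (y' # xs) v \<longrightarrow> Suc w = v" using eval_Mn.IH(2) by blast
    with b show ?thesis by blast
  qed
qed

fun dec :: "nat \<Rightarrow> bool list" where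
  "dec n = (if n = 0 then [] else (n mod 2 = 0) # dec ((n - 1) div 2))"
declare dec.simps[simp del]

lemma dec0[simp]: "dec 0 = []" by (simp add: dec.simps)
lemma decpos: "n > 0 \<Longrightarrow> dec n = (n mod 2 = 0) # dec ((n - 1) div 2)"
  by (subst dec.simps) simp

lemma dec_enc[simp]: "dec (enc x) = x"
proof (induction x)
  case Nil thus ?case by simp
next
  case (Cons b bs) thus ?case by (subst decpos) auto
qed

lemma enc_dec[simp]: "enc (dec n) = n"
proof (induction n rule: less_induct)
  case (less n)
  show ?case
  proof (cases "n = 0")
    case True thus ?thesis by (simp add: dec.simps)
  next
    case False
    hence "(n - 1) div 2 < n" by simp
    hence "enc (dec ((n - 1) div 2)) = (n - 1) div 2" using less by blast
    thus ?thesis using False by (subst decpos) (auto, presburger+)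
  qed
qed

lemma enc_inj: "enc x = enc y \<longleftrightarrow> x = y"
  by (metis dec_enc)

lemma enc_append: "enc (a @ b) = enc a + 2 ^ length a * enc b"
  by (induction a) auto

lemma enc_bounds: "2 ^ length x \<le> enc x + 1 \<and> enc x + 1 < 2 ^ (length x + 1)"
  by (induction x) auto

lemma enc_ge_len: "length x \<le> enc x"
proof -
  have "length x < 2 ^ length x" by simp
  thus ?thesis using enc_bounds[of x] by linarith
qed

lemma enc_Nil[simp]: "enc x = 0 \<longleftrightarrow> x = []"
  by (cases x) auto



lemma evalComp1: "eval g xs a \<Longrightarrow> eval f [a] z \<Longrightarrow> eval (Comp f [g]) xs z"
  by (rule eval_Comp[of xs "[g]" "[a]"]) auto
lemma evalComp2: "eval g xs a \<Longrightarrow> eval h xs b \<Longrightarrow> eval f [a,b] z \<Longrightarrow> eval (Comp f [g,h]) xs z"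
  by (rule eval_Comp[of xs "[g,h]" "[a,b]"]) auto
lemma evalComp3: "eval g xs a \<Longrightarrow> eval h xs b \<Longrightarrow> eval k xs c \<Longrightarrow> eval f [a,b,c] z \<Longrightarrow> eval (Comp f [g,h,k]) xs z"
  by (rule eval_Comp[of xs "[g,h,k]" "[a,b,c]"]) auto
lemma evalProj: "i < length xs \<Longrightarrow> v = xs ! i \<Longrightarrow> eval (Proj i) xs v"
  using eval_Proj by simp
lemma evalS: "eval S [x] (Suc x)" by (rule eval_S)

fun const :: "nat \<Rightarrow> recf" where
  "const 0 = Z" | "const (Suc c) = Comp S [const c]"

declare const.simps[simp del]
lemma eval_const: "eval (const c) xs c"
  by (induction c) (auto simp: const.simps intro: evalComp1 eval_Z evalS)

lemma eval_PrecS': "eval (Prec f g) (n # xs) r \<Longrightarrow> eval g (n # r # xs) y \<Longrightarrow> y = y' \<Longrightarrow> eval (Prec f g) (Suc n # xs) y'"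
  using eval_PrecS by blast

definition "addr = Prec (Proj 0) (Comp S [Proj 1])"
lemma eval_add: "eval addr [a, b] (a + b)"
proof (induction a)
  case 0 show ?case unfolding addr_def by (rule eval_Prec0) (auto intro: evalProj)
next
  case (Suc a) show ?case unfolding addr_def
    by (rule eval_PrecS[OF Suc[unfolded addr_def]]) (auto intro!: evalComp1 evalProj evalS)
qed

definition "mulr = Prec Z (Comp addr [Proj 1, Proj 2])"
lemma eval_mul: "eval mulr [a, b] (a * b)"
proof (induction a)
  case 0 show ?case unfolding mulr_def by (rule eval_Prec0) (auto intro: eval_Z)
next
  case (Suc a) show ?case unfolding mulr_def
    by (rule eval_PrecS[OF Suc[unfolded mulr_def]])
       (rule evalComp2, auto intro!: evalProj intro: eval_add[of "a*b" b, simplified add.commute])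
qed

definition "predr = Prec Z (Proj 0)"
lemma eval_pred: "eval predr [a] (a - 1)"
proof (induction a)
  case 0 show ?case unfolding predr_def by (rule eval_Prec0) (auto intro: eval_Z)
next
  case (Suc a) show ?case unfolding predr_def
    by (rule eval_PrecS'[OF Suc[unfolded predr_def]]) (auto intro: evalProj)
qed

definition "subr' = Prec (Proj 0) (Comp predr [Proj 1])"
lemma eval_sub': "eval subr' [b, a] (a - b)"
proof (induction b)
  case 0 show ?case unfolding subr'_def by (rule eval_Prec0) (auto intro: evalProj)
next
  case (Suc b) show ?case unfolding subr'_def
    by (rule eval_PrecS[OF Suc[unfolded subr'_def]])
       (rule evalComp1, auto intro!: evalProj intro: eval_pred[of "a - b", simplified])
qed

definition "subr = Comp subr' [Proj 1, Proj 0]"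
lemma eval_sub: "eval subr [a, b] (a - b)"
  unfolding subr_def by (rule evalComp2) (auto intro: evalProj eval_sub')

definition "parr = Prec Z (Comp subr [const 1, Proj 1])"
lemma eval_par: "eval parr [a] (a mod 2)"
proof (induction a)
  case 0 show ?case unfolding parr_def by (rule eval_Prec0) (auto intro: eval_Z)
next
  case (Suc a)
  have h: "Suc a mod 2 = 1 - a mod 2" by presburger
  show ?case unfolding parr_def
    apply (rule eval_PrecS'[OF Suc[unfolded parr_def]])
     apply (rule evalComp2[OF eval_const evalProj eval_sub]) using h by auto
qed

definition "halfr = Prec Z (Comp addr [Proj 1, Comp parr [Proj 0]])"
lemma eval_half: "eval halfr [a] (a div 2)"
proof (induction a)
  case 0 show ?case unfolding halfr_def by (rule eval_Prec0) (auto intro: eval_Z)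
next
  case (Suc a)
  have h: "Suc a div 2 = a div 2 + a mod 2" by presburger
  show ?case unfolding halfr_def
    apply (rule eval_PrecS'[OF Suc[unfolded halfr_def]])
     apply (rule evalComp2[OF evalProj evalComp1[OF evalProj eval_par] eval_add]) using h by auto
qed

definition "nsg g = Comp subr [const 1, g]"
definition "ifr = Comp addr [Comp mulr [nsg (nsg (Proj 0)), Proj 1], Comp mulr [nsg (Proj 0), Proj 2]]"
lemma eval_if: "eval ifr [a, b, c] (if a \<noteq> 0 then b else c)"
proof -
  have e: "eval g xs v \<Longrightarrow> eval (nsg g) xs (1 - v)" for g xs v
    unfolding nsg_def by (auto intro!: evalComp2 eval_const eval_sub)
  have "(if a \<noteq> 0 then b else c) = (1 - (1 - a)) * b + (1 - a) * c" by auto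
  thus ?thesis unfolding ifr_def
    by (auto intro!: evalComp2 e evalProj eval_add eval_mul)
qed

definition "ler = nsg (Comp subr [Proj 0, Proj 1])"
lemma eval_le: "eval ler [a, b] (if a \<le> b then 1 else 0)"
proof -
  have "(if a \<le> b then 1 else 0) = 1 - (a - b)" by auto
  thus ?thesis unfolding ler_def nsg_def
    by (auto intro!: evalComp2 eval_const evalProj eval_sub)
qed

fun tri :: "nat \<Rightarrow> nat" where "tri 0 = 0" | "tri (Suc n) = tri n + Suc n"

definition "trir = Prec Z (Comp addr [Proj 1, Comp S [Proj 0]])"
lemma eval_tri: "eval trir [a] (tri a)"
proof (induction a)
  case 0 show ?case unfolding trir_def by (rule eval_Prec0) (auto intro: eval_Z)
next
  case (Suc a)
  show ?case unfolding trir_def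
    apply (rule eval_PrecS'[OF Suc[unfolded trir_def]])
     apply (rule evalComp2[OF evalProj evalComp1[OF evalProj evalS] eval_add]) by auto
qed

fun raux :: "nat \<Rightarrow> nat \<Rightarrow> nat" where
  "raux 0 z = 0" | "raux (Suc n) z = raux n z + (if tri (Suc n) \<le> z then 1 else 0)"

definition "rauxr = Prec Z (Comp addr [Proj 1, Comp ler [Comp trir [Comp S [Proj 0]], Proj 2]])"
lemma eval_raux: "eval rauxr [n, z] (raux n z)"
proof (induction n)
  case 0 show ?case unfolding rauxr_def by (rule eval_Prec0) (auto intro: eval_Z)
next
  case (Suc a)
  show ?case unfolding rauxr_def
    apply (rule eval_PrecS'[OF Suc[unfolded rauxr_def]])
     apply (rule evalComp2[OF evalProj evalComp2[OF evalComp1[OF evalComp1[OF evalProj evalS] eval_tri] evalProj eval_le] eval_add]) by auto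
qed

definition "rootr = Comp rauxr [Proj 0, Proj 0]"
lemma eval_root: "eval rootr [z] (raux z z)"
  unfolding rootr_def by (auto intro!: evalComp2 evalProj eval_raux)

definition "pow2r = Prec (const 1) (Comp addr [Proj 1, Proj 1])"
lemma eval_pow2: "eval pow2r [n] (2 ^ n)"
proof (induction n)
  case 0 show ?case unfolding pow2r_def by (rule eval_Prec0) (auto intro: eval_const)
next
  case (Suc a)
  show ?case unfolding pow2r_def
    apply (rule eval_PrecS'[OF Suc[unfolded pow2r_def]])
     apply (rule evalComp2[OF evalProj evalProj eval_add]) by auto
qed

fun laux :: "nat \<Rightarrow> nat \<Rightarrow> nat" where
  "laux 0 z = 0" | "laux (Suc n) z = laux n z + (if 2 ^ Suc n \<le> Suc z then 1 else 0)"

definition "lauxr = Prec Z (Comp addr [Proj 1, Comp ler [Comp pow2r [Comp S [Proj 0]], Comp S [Proj 2]]])"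
lemma eval_laux: "eval lauxr [n, z] (laux n z)"
proof (induction n)
  case 0 show ?case unfolding lauxr_def by (rule eval_Prec0) (auto intro: eval_Z)
next
  case (Suc a)
  show ?case unfolding lauxr_def
    apply (rule eval_PrecS'[OF Suc[unfolded lauxr_def]])
     apply (rule evalComp2[OF evalProj evalComp2[OF evalComp1[OF evalComp1[OF evalProj evalS] eval_pow2] evalComp1[OF evalProj evalS] eval_le] eval_add]) by auto
qed

definition "pwr = Comp pow2r [Comp lauxr [Proj 0, Proj 0]]"
lemma eval_pw: "eval pwr [z] (2 ^ laux z z)"
  unfolding pwr_def by (auto intro!: evalComp1 evalComp2 evalProj eval_laux eval_pow2)



lemma tri_mono: "a \<le> b \<Longrightarrow> tri a \<le> tri b"
  by (induction b) (auto simp: le_Suc_eq)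
lemma tri_less: "a < b \<Longrightarrow> tri a < tri b"
  by (induction b) (auto simp: less_Suc_eq)
lemma tri_le_iff: "tri a \<le> tri b \<longleftrightarrow> a \<le> b"
  by (meson linorder_not_le tri_less tri_mono)
lemma tri_ge: "m \<le> tri m" by (induction m) auto

lemma raux_val: assumes "tri m \<le> z" "z < tri (Suc m)" shows "raux n z = min n m"
proof (induction n)
  case 0 thus ?case by simp
next
  case (Suc n)
  have "tri (Suc n) \<le> z \<longleftrightarrow> Suc n \<le> m"
    using assms tri_le_iff[of "Suc n" m] tri_le_iff[of "Suc m" "Suc n"] by linarith
  thus ?case using Suc by auto
qed

lemma raux_self: assumes "tri m \<le> z" "z < tri (Suc m)" shows "raux z z = m"
  using raux_val[OF assms, of z] tri_ge[of m] assms by simp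

lemma laux_val: assumes "2 ^ L \<le> Suc z" "Suc z < 2 ^ Suc L" shows "laux n z = min n L"
proof (induction n)
  case 0 thus ?case by simp
next
  case (Suc n)
  have "2 ^ Suc n \<le> Suc z \<longleftrightarrow> Suc n \<le> L"
  proof
    assume "2 ^ Suc n \<le> Suc z"
    hence "(2::nat) ^ Suc n < 2 ^ Suc L" using assms by linarith
    thus "Suc n \<le> L" using power_strict_increasing_iff[of "2::nat"] by simp
  next
    assume "Suc n \<le> L"
    hence "(2::nat) ^ Suc n \<le> 2 ^ L" by (rule power_increasing) simp
    thus "2 ^ Suc n \<le> Suc z" using assms by linarith
  qed
  thus ?case using Suc by auto
qed

lemma laux_enc: "laux (enc x) (enc x) = length x"
proof -
  have "2 ^ length x \<le> Suc (enc x)" "Suc (enc x) < 2 ^ Suc (length x)" using enc_bounds[of x] by auto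
  from laux_val[OF this, of "enc x"] show ?thesis using enc_ge_len[of x] by simp
qed

definition cpair :: "nat \<Rightarrow> nat \<Rightarrow> nat" where "cpair a b = tri (a + b) + a"
definition cfst :: "nat \<Rightarrow> nat" where "cfst z = z - tri (raux z z)"
definition csnd :: "nat \<Rightarrow> nat" where "csnd z = raux z z - cfst z"

lemma raux_cpair: "raux (cpair a b) (cpair a b) = a + b"
  by (rule raux_self) (auto simp: cpair_def)
lemma cfst_pair[simp]: "cfst (cpair a b) = a"
  unfolding cfst_def raux_cpair by (simp add: cpair_def)
lemma csnd_pair[simp]: "csnd (cpair a b) = b"
  unfolding csnd_def raux_cpair by simp

definition "fstr = Comp subr [Proj 0, Comp trir [rootr]]"
definition "sndr = Comp subr [rootr, fstr]"
definition "pairr = Comp addr [Comp trir [Comp addr [Proj 0, Proj 1]], Proj 0]"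

lemma eval_fst: "eval fstr [z] (cfst z)"
  unfolding fstr_def cfst_def
  by (rule evalComp2[OF evalProj evalComp1[OF eval_root eval_tri] eval_sub]) auto
lemma eval_snd: "eval sndr [z] (csnd z)"
  unfolding sndr_def csnd_def
  by (rule evalComp2[OF eval_root eval_fst eval_sub])
lemma eval_pair: "eval pairr [a, b] (cpair a b)"
  unfolding pairr_def cpair_def
  by (rule evalComp2[OF evalComp1[OF evalComp2[OF evalProj evalProj eval_add] eval_tri] evalProj eval_add]) auto

datatype ex = V nat | K nat | Add ex ex | Mul ex ex | Sub ex ex | If ex ex ex | Par ex | Half ex
  | Pr ex ex | Fs ex | Sn ex | Pw ex | Call ex

fun ev :: "(nat \<Rightarrow> nat) \<Rightarrow> ex \<Rightarrow> nat list \<Rightarrow> nat" where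
  "ev uo (V i) xs = xs ! i"
| "ev uo (K c) xs = c"
| "ev uo (Add a b) xs = ev uo a xs + ev uo b xs"
| "ev uo (Mul a b) xs = ev uo a xs * ev uo b xs"
| "ev uo (Sub a b) xs = ev uo a xs - ev uo b xs"
| "ev uo (If a b c) xs = (if ev uo a xs \<noteq> 0 then ev uo b xs else ev uo c xs)"
| "ev uo (Par a) xs = ev uo a xs mod 2"
| "ev uo (Half a) xs = ev uo a xs div 2"
| "ev uo (Pr a b) xs = cpair (ev uo a xs) (ev uo b xs)"
| "ev uo (Fs a) xs = cfst (ev uo a xs)"
| "ev uo (Sn a) xs = csnd (ev uo a xs)"
| "ev uo (Pw a) xs = 2 ^ laux (ev uo a xs) (ev uo a xs)"
| "ev uo (Call a) xs = uo (ev uo a xs)"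

fun ok :: "(nat \<Rightarrow> bool) \<Rightarrow> (nat \<Rightarrow> nat) \<Rightarrow> ex \<Rightarrow> nat list \<Rightarrow> bool" where
  "ok cv uo (V i) xs = (i < length xs)"
| "ok cv uo (K c) xs = True"
| "ok cv uo (Add a b) xs = (ok cv uo a xs \<and> ok cv uo b xs)"
| "ok cv uo (Mul a b) xs = (ok cv uo a xs \<and> ok cv uo b xs)"
| "ok cv uo (Sub a b) xs = (ok cv uo a xs \<and> ok cv uo b xs)"
| "ok cv uo (If a b c) xs = (ok cv uo a xs \<and> ok cv uo b xs \<and> ok cv uo c xs)"
| "ok cv uo (Par a) xs = ok cv uo a xs"
| "ok cv uo (Half a) xs = ok cv uo a xs"
| "ok cv uo (Pr a b) xs = (ok cv uo a xs \<and> ok cv uo b xs)"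
| "ok cv uo (Fs a) xs = ok cv uo a xs"
| "ok cv uo (Sn a) xs = ok cv uo a xs"
| "ok cv uo (Pw a) xs = ok cv uo a xs"
| "ok cv uo (Call a) xs = (ok cv uo a xs \<and> cv (ev uo a xs))"

fun comp :: "recf \<Rightarrow> ex \<Rightarrow> recf" where
  "comp fU (V i) = Proj i"
| "comp fU (K c) = const c"
| "comp fU (Add a b) = Comp addr [comp fU a, comp fU b]"
| "comp fU (Mul a b) = Comp mulr [comp fU a, comp fU b]"
| "comp fU (Sub a b) = Comp subr [comp fU a, comp fU b]"
| "comp fU (If a b c) = Comp ifr [comp fU a, comp fU b, comp fU c]"
| "comp fU (Par a) = Comp parr [comp fU a]"
| "comp fU (Half a) = Comp halfr [comp fU a]"
| "comp fU (Pr a b) = Comp pairr [comp fU a, comp fU b]"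
| "comp fU (Fs a) = Comp fstr [comp fU a]"
| "comp fU (Sn a) = Comp sndr [comp fU a]"
| "comp fU (Pw a) = Comp pwr [comp fU a]"
| "comp fU (Call a) = Comp fU [comp fU a]"

lemma eval_comp:
  assumes U: "\<And>z. cv z \<Longrightarrow> eval fU [z] (uo z)"
  shows "ok cv uo e xs \<Longrightarrow> eval (comp fU e) xs (ev uo e xs)"
proof (induction e)
  case (V i) thus ?case by (auto intro: evalProj)
next
  case (K c) thus ?case by (auto intro: eval_const)
next
  case (Add a b) thus ?case by (auto intro: evalComp2[OF _ _ eval_add])
next
  case (Mul a b) thus ?case by (auto intro: evalComp2[OF _ _ eval_mul])
next
  case (Sub a b) thus ?case by (auto intro: evalComp2[OF _ _ eval_sub])
next
  case (If a b c)
  hence "eval (Comp ifr [comp fU a, comp fU b, comp fU c]) xs (if ev uo a xs \<noteq> 0 then ev uo b xs else ev uo c xs)"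
    by (intro evalComp3[OF _ _ _ eval_if]) auto
  thus ?case by simp
next
  case (Par a) thus ?case by (auto intro: evalComp1[OF _ eval_par])
next
  case (Half a) thus ?case by (auto intro: evalComp1[OF _ eval_half])
next
  case (Pr a b) thus ?case by (auto intro: evalComp2[OF _ _ eval_pair])
next
  case (Fs a) thus ?case by (auto intro: evalComp1[OF _ eval_fst])
next
  case (Sn a) thus ?case by (auto intro: evalComp1[OF _ eval_snd])
next
  case (Pw a) thus ?case by (auto intro: evalComp1[OF _ eval_pw])
next
  case (Call a) thus ?case by (auto intro: evalComp1[OF _ U])
qed



type_synonym st = "nat \<times> nat \<times> nat \<times> nat \<times> nat \<times> nat"

fun code :: "st \<Rightarrow> nat" where
  "code (r, c, rem, prog, acc, apow) = cpair r (cpair c (cpair rem (cpair prog (cpair acc apow))))"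

definition "eS = V 1"
definition "eR = Fs eS"
definition "eC = Fs (Sn eS)"
definition "eRem = Fs (Sn (Sn eS))"
definition "eProg = Fs (Sn (Sn (Sn eS)))"
definition "eAcc = Fs (Sn (Sn (Sn (Sn eS))))"
definition "eApow = Sn (Sn (Sn (Sn (Sn eS))))"

definition "eR' = If eR (Half (Sub eR (K 1))) (K 0)"
definition "eC' = If eR (If eRem eC (If (Par eR) (Add eC (K 1)) eC)) eC"
definition "eRem' = If eR (If eRem (Sub eRem (K 1)) (If (Par eR) (K 0) (Sub (Half (Half eC)) (K 2)))) eRem"
definition "eProg' = If eR (If eRem (Add (Mul (K 2) eProg) (If (Par eR) (K 1) (K 2))) (K 0)) eProg"
definition "eCM = Sub eC (Mul (K 4) (Half (Half eC)))"
definition "eFull = Add (Mul (K 4) eProg') (Add (Mul (K 2) (Add (K 1) (Half eCM))) (Add (K 1) (Par eCM)))"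
definition "eArg e = If eR (If eRem (If (Sub eRem (K 1)) (K e) eFull) (K e)) (K e)"
definition "eOut e = Call (eArg e)"
definition "stepE e = Pr eR' (Pr eC' (Pr eRem' (Pr eProg' (Pr (Add eAcc (Mul eApow (eOut e))) (Mul eApow (Pw (eOut e)))))))"
definition "initE = Pr (V 0) (Pr (K 0) (Pr (K 0) (Pr (K 0) (Pr (K 0) (K 1)))))"

fun progT :: "st \<Rightarrow> nat" where
  "progT (r, c, rem, prog, acc, apow) =
     (if r \<noteq> 0 then (if rem \<noteq> 0 then 2 * prog + (if r mod 2 \<noteq> 0 then 1 else 2) else 0) else prog)"

fun argT :: "nat \<Rightarrow> st \<Rightarrow> nat" where
  "argT e (r, c, rem, prog, acc, apow) =
     (if r \<noteq> 0 then (if rem \<noteq> 0 then (if rem - 1 \<noteq> 0 then e else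
        4 * progT (r, c, rem, prog, acc, apow) + (2 * (1 + (c - 4 * (c div 2 div 2)) div 2) + (1 + (c - 4 * (c div 2 div 2)) mod 2)))
      else e) else e)"

fun stepT :: "nat \<Rightarrow> (nat \<Rightarrow> nat) \<Rightarrow> st \<Rightarrow> st" where
  "stepT e uo (r, c, rem, prog, acc, apow) =
     (let out = uo (argT e (r, c, rem, prog, acc, apow)) in
      (if r \<noteq> 0 then (r - 1) div 2 else 0,
       if r \<noteq> 0 then (if rem \<noteq> 0 then c else if r mod 2 \<noteq> 0 then c + 1 else c) else c,
       if r \<noteq> 0 then (if rem \<noteq> 0 then rem - 1 else if r mod 2 \<noteq> 0 then 0 else c div 2 div 2 - 2) else rem,
       progT (r, c, rem, prog, acc, apow),
       acc + apow * out,
       apow * 2 ^ laux out out))"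

lemma ev_step: "ev uo (stepE e) [i, code s, x] = code (stepT e uo s)"
  by (cases s) (simp add: stepE_def eR_def eC_def eRem_def eProg_def eAcc_def eApow_def eS_def
      eR'_def eC'_def eRem'_def eProg'_def eCM_def eFull_def eArg_def eOut_def Let_def)

lemma ev_arg: "ev uo (eArg e) [i, code s, x] = argT e s"
  by (cases s) (simp add: eR_def eC_def eRem_def eProg_def eAcc_def eApow_def eS_def
      eR'_def eC'_def eRem'_def eProg'_def eCM_def eFull_def eArg_def Let_def)

lemma ok_arg: "ok cv uo (eArg e) [i, s, x]"
  by (simp add: eR_def eC_def eRem_def eProg_def eAcc_def eApow_def eS_def
      eR'_def eC'_def eRem'_def eProg'_def eCM_def eFull_def eArg_def)

lemma ok_step: "cv (argT e s) \<Longrightarrow> ok cv uo (stepE e) [i, code s, x]"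
  using ok_arg[of cv uo e i "code s" x] ev_arg[of uo e i s x]
  by (simp add: stepE_def eR_def eC_def eRem_def eProg_def eAcc_def eApow_def eS_def
      eR'_def eC'_def eRem'_def eProg'_def eOut_def del: ok.simps(13)) (simp add: eS_def)

definition "LP fU e = Prec (comp fU initE) (comp fU (stepE e))"

locale mach =
  fixes fU :: recf and e :: nat and uo :: "nat \<Rightarrow> nat" and cv :: "nat \<Rightarrow> bool" and x0 :: nat
  assumes U: "\<And>z. cv z \<Longrightarrow> eval fU [z] (uo z)"
    and cve: "cv e" and uoe: "uo e = 0"
begin

definition "Reach n s \<longleftrightarrow> eval (LP fU e) [n, x0] (code s)"

lemma Reach0: "Reach 0 (x0, 0, 0, 0, 0, 1)"
proof -
  have "eval (comp fU initE) [x0] (ev uo initE [x0])"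
    by (rule eval_comp[OF U]) (auto simp: initE_def)
  thus ?thesis unfolding Reach_def LP_def by (intro eval_Prec0) (simp add: initE_def)
qed

lemma ReachS: "Reach n s \<Longrightarrow> cv (argT e s) \<Longrightarrow> Reach (Suc n) (stepT e uo s)"
proof -
  assume a: "Reach n s" "cv (argT e s)"
  have "eval (comp fU (stepE e)) [n, code s, x0] (ev uo (stepE e) [n, code s, x0])"
    by (rule eval_comp[OF U ok_step[of cv e s, OF a(2)]])
  thus ?thesis using a(1) unfolding Reach_def LP_def ev_step by (intro eval_PrecS)
qed

lemma laux00: "laux 0 0 = 0" by simp

lemma step_noop: "stepT e uo (0, c, rem, prog, acc, apow) = (0, c, rem, prog, acc, apow)"
  by (simp add: uoe)

lemma Reach_noop: "Reach n (0, c, rem, prog, acc, apow) \<Longrightarrow> Reach (n + k) (0, c, rem, prog, acc, apow)"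
proof (induction k)
  case 0 thus ?case by simp
next
  case (Suc k)
  from ReachS[OF Suc.IH[OF Suc.prems]] show ?case by (simp add: uoe cve)
qed

lemma step_zero: "stepT e uo (enc (False # rest), c, 0, prog, acc, apow) = (enc rest, Suc c, 0, 0, acc, apow)"
  "argT e (enc (False # rest), c, 0, prog, acc, apow) = e"
  by (simp_all add: uoe)

lemma step_one: "stepT e uo (enc (True # rest), c, 0, prog, acc, apow) = (enc rest, c, c div 2 div 2 - 2, 0, acc, apow)"
  "argT e (enc (True # rest), c, 0, prog, acc, apow) = e"
  by (simp_all add: uoe)

lemma bitv: "2 * prog + (if enc (d # rest) mod 2 \<noteq> 0 then 1 else 2) = enc (d # dec prog)"
  by (cases d) auto

lemma step_bit: "rem \<ge> 2 \<Longrightarrow> stepT e uo (enc (d # rest), c, rem, prog, acc, apow) = (enc rest, c, rem - 1, enc (d # dec prog), acc, apow)"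
  "rem \<ge> 2 \<Longrightarrow> argT e (enc (d # rest), c, rem, prog, acc, apow) = e"
  using bitv[of prog d rest] by (simp_all add: uoe Let_def del: enc.simps) (simp_all)

end


lemma cm4: "(c::nat) - 4 * (c div 2 div 2) = c mod 4" by presburger

definition fullv :: "nat \<Rightarrow> nat \<Rightarrow> nat" where
  "fullv c p = 4 * p + (2 * (1 + c mod 4 div 2) + (1 + c mod 4 mod 2))"

context mach begin

lemma step_final:
  "stepT e uo (enc (d # rest), c, 1, prog, acc, apow) =
     (enc rest, c, 0, enc (d # dec prog), acc + apow * uo (fullv c (enc (d # dec prog))),
      apow * 2 ^ laux (uo (fullv c (enc (d # dec prog)))) (uo (fullv c (enc (d # dec prog)))))"
  "argT e (enc (d # rest), c, 1, prog, acc, apow) = fullv c (enc (d # dec prog))"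
  using bitv[of prog d rest] by (simp_all add: Let_def cm4 fullv_def del: enc.simps) (simp_all)

lemma Reach_zeros: "Reach n (enc (replicate m False @ rest), c, 0, prog, acc, apow) \<Longrightarrow>
   \<exists>p. Reach (n + m) (enc rest, c + m, 0, p, acc, apow)"
proof (induction m arbitrary: n c prog)
  case 0 thus ?case by auto
next
  case (Suc m)
  have "Reach (Suc n) (enc (replicate m False @ rest), Suc c, 0, 0, acc, apow)"
    using ReachS[OF Suc.prems[simplified] ] step_zero[of "replicate m False @ rest"] cve by simp
  from Suc.IH[OF this] show ?case by auto
qed

lemma Reach_bits: "k \<ge> 1 \<Longrightarrow> Reach n (enc (ds @ rest), c, length ds + k, prog, acc, apow) \<Longrightarrow>
   Reach (n + length ds) (enc rest, c, k, enc (rev ds @ dec prog), acc, apow)"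
proof (induction ds arbitrary: n prog)
  case Nil thus ?case by simp
next
  case (Cons d ds)
  have "Reach (Suc n) (enc (ds @ rest), c, length ds + k, enc (d # dec prog), acc, apow)"
    using ReachS[OF Cons.prems(2)[simplified append_Cons]] step_bit[of "length (d # ds) + k" d "ds @ rest"] cve Cons.prems(1)
    by simp
  from Cons.IH[OF Cons.prems(1) this] show ?case by (simp del: enc.simps)
qed

lemma Reach_item:
  assumes R: "Reach n (enc (True # rev R @ rest), c, 0, prog, acc, apow)"
    and P: "P = a1 # a2 # R" "R \<noteq> []"
    and c: "c = 4 * length P + ((if a1 then 1 else 0) + 2 * (if a2 then 1 else 0))"
    and cvP: "cv (enc P)" and uoP: "uo (enc P) = enc x"
  shows "Reach (n + Suc (length R)) (enc rest, c, 0, enc R, acc + apow * enc x, apow * 2 ^ length x)"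
proof -
  have cd: "c div 2 div 2 = length P" using c by auto
  have "Reach (Suc n) (enc (rev R @ rest), c, length R, 0, acc, apow)"
    using ReachS[OF R] step_one[of "rev R @ rest" c prog acc apow] cve cd P by simp
  moreover obtain ds0 dl where ds: "rev R = ds0 @ [dl]" using P(2)
    by (metis rev_is_Nil_conv rev_exhaust)
  ultimately have "Reach (Suc n) (enc (ds0 @ dl # rest), c, length ds0 + 1, 0, acc, apow)"
    by (metis append.assoc append_Cons append_Nil length_append_singleton length_rev Suc_eq_plus1)
  from Reach_bits[OF _ this] have r2: "Reach (Suc n + length ds0) (enc (dl # rest), c, 1, enc (rev ds0), acc, apow)"
    by simp
  have rr: "dl # rev ds0 = R" using ds by (metis rev_eq_Cons_iff rev_rev_ident rev_append rev_singleton_conv append_Cons append_Nil)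
  have fv: "fullv c (enc (dl # rev ds0)) = enc P"
    using c P rr by (cases a1; cases a2) (auto simp: fullv_def)
  have "Reach (Suc (Suc n + length ds0)) (enc rest, c, 0, enc R, acc + apow * enc x, apow * 2 ^ length x)"
    using ReachS[OF r2] step_final[of dl rest c "enc (rev ds0)" acc apow] fv rr cvP uoP laux_enc[of x]
    by simp
  moreover have "Suc (Suc n + length ds0) = n + Suc (length R)"
    using ds by (metis add_Suc_right length_append_singleton length_rev plus_1_eq_Suc add.commute add_Suc)
  ultimately show ?thesis by metis
qed

end


fun build :: "nat \<Rightarrow> (nat \<Rightarrow> nat) \<Rightarrow> (nat \<Rightarrow> bool list) \<Rightarrow> nat list \<Rightarrow> bool list" where
  "build c0 key R [] = []"
| "build c0 key R (i # L) = replicate (key i - c0) False @ True # rev (R i) @ build (key i) key R L"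

definition jv :: "bool list \<Rightarrow> nat" where
  "jv P = (if P ! 0 then 1 else 0) + 2 * (if P ! 1 then 1 else 0)"

definition "accE = Fs (Sn (Sn (Sn (Sn (V 0)))))"
definition "Dr fU e = Comp (comp fU accE) [Comp (LP fU e) [Proj 0, Proj 0]]"

context mach begin

lemma Reach_build:
  assumes items: "\<And>i. i \<in> set L \<Longrightarrow> length (Pg i) \<ge> 3 \<and> cv (enc (Pg i)) \<and> uo (enc (Pg i)) = enc (X i)"
    and key: "\<And>i. key i = 4 * length (Pg i) + jv (Pg i)"
    and Rd: "\<And>i. R i = drop 2 (Pg i)"
  shows "Reach n (enc (build c0 key R L @ rest), c0, 0, prog, acc, apow) \<Longrightarrow> (\<forall>i\<in>set L. c0 \<le> key i) \<Longrightarrow>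
    sorted (map key L) \<Longrightarrow>
    \<exists>c p. Reach (n + length (build c0 key R L)) (enc rest, c, 0, p,
       acc + apow * enc (concat (map X L)), apow * 2 ^ length (concat (map X L)))"
  using items
proof (induction L arbitrary: n c0 prog acc apow)
  case Nil thus ?case by auto
next
  case (Cons i L)
  let ?m = "key i - c0"
  have it: "length (Pg i) \<ge> 3" "cv (enc (Pg i))" "uo (enc (Pg i)) = enc (X i)" using Cons.prems(4) by auto
  from Cons.prems(1) have "Reach n (enc (replicate ?m False @ (True # rev (R i) @ build (key i) key R L @ rest)), c0, 0, prog, acc, apow)"
    by simp
  from Reach_zeros[OF this] obtain p where
    r1: "Reach (n + ?m) (enc (True # rev (R i) @ (build (key i) key R L @ rest)), key i, 0, p, acc, apow)"
    using Cons.prems(2) by auto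
  obtain a1 a2 RR where P: "Pg i = a1 # a2 # RR" "RR \<noteq> []" using it(1)
    by (metis One_nat_def Suc_1 drop0 drop_Suc_Cons list.size(3) Suc_le_length_iff numeral_3_eq_3 le_Suc_eq not_less_eq_eq Cons_nth_drop_Suc)
  have RR: "R i = RR" using Rd P by simp
  have kc: "key i = 4 * length (Pg i) + ((if a1 then 1 else 0) + 2 * (if a2 then 1 else 0))"
    using key P by (simp add: jv_def)
  from Reach_item[OF r1[unfolded RR] P kc it(2) it(3)]
  have r2: "Reach (n + ?m + Suc (length RR)) (enc (build (key i) key R L @ rest), key i, 0, enc RR,
      acc + apow * enc (X i), apow * 2 ^ length (X i))" .
  have "\<exists>c p. Reach (n + ?m + Suc (length RR) + length (build (key i) key R L)) (enc rest, c, 0, p,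
       (acc + apow * enc (X i)) + (apow * 2 ^ length (X i)) * enc (concat (map X L)),
       (apow * 2 ^ length (X i)) * 2 ^ length (concat (map X L)))"
    by (rule Cons.IH[OF r2]) (use Cons.prems in auto)
  moreover have "(acc + apow * enc (X i)) + (apow * 2 ^ length (X i)) * enc (concat (map X L))
     = acc + apow * enc (concat (map X (i # L)))"
    by (simp add: enc_append algebra_simps)
  moreover have "(apow * 2 ^ length (X i)) * 2 ^ length (concat (map X L)) = apow * 2 ^ length (concat (map X (i # L)))"
    by (simp add: power_add)
  moreover have "n + ?m + Suc (length RR) + length (build (key i) key R L) = n + length (build c0 key R (i # L))"
    using RR by simp
  ultimately show ?case by metis
qed

lemma Reach_Dr: "Reach x0 (r, c, rem, p, acc, apow) \<Longrightarrow> eval (Dr fU e) [x0] acc"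
proof -
  assume a: "Reach x0 (r, c, rem, p, acc, apow)"
  have "eval (comp fU accE) [code (r, c, rem, p, acc, apow)] (ev uo accE [code (r, c, rem, p, acc, apow)])"
  proof (rule eval_comp[OF U])
    show "ok cv uo accE [code (r, c, rem, p, acc, apow)]" unfolding accE_def by simp
  qed
  hence "eval (comp fU accE) [code (r, c, rem, p, acc, apow)] acc" by (simp add: accE_def)
  moreover have "eval (Comp (LP fU e) [Proj 0, Proj 0]) [x0] (code (r, c, rem, p, acc, apow))"
    using a unfolding Reach_def by (intro evalComp2[OF evalProj evalProj]) auto
  ultimately show ?thesis unfolding Dr_def by (intro evalComp1)
qed

end


lemma build_len: "sorted (map key L) \<Longrightarrow> \<forall>i\<in>set L. c0 \<le> key i \<and> key i \<le> Mx \<Longrightarrow> c0 \<le> Mx \<Longrightarrow>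
   length (build c0 key R L) + c0 \<le> Mx + sum_list (map (\<lambda>i. 1 + length (R i)) L)"
proof (induction L arbitrary: c0)
  case Nil thus ?case by simp
next
  case (Cons i L)
  have "length (build (key i) key R L) + key i \<le> Mx + sum_list (map (\<lambda>i. 1 + length (R i)) L)"
    using Cons by (intro Cons.IH) auto
  thus ?case using Cons.prems by simp
qed

lemma pow2_ge: "1 + real k \<le> (2::real) ^ k"
  by (induction k) auto

lemma jv_le: "jv P \<le> 3" unfolding jv_def by auto

theorem theorem7:
  fixes U :: "bool list \<Rightarrow> bool list option"
  assumes "universal U"
  shows "\<exists>p :: real poly. \<exists>N. \<forall>n\<ge>N. \<forall>(\<alpha>::int) (xs :: bool list list).
     real_of_int \<alpha> > 7 * log 2 (real n) + 6 \<longrightarrow>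
     (\<forall>x\<in>set xs. length x = n) \<longrightarrow>
     mutually_independent U \<alpha> xs \<longrightarrow>
     real (length xs) \<le> poly p (real n) * 2 powr (real_of_int \<alpha>)"
proof -
  from assms have pcU: "partial_computable U"
    and univ: "\<And>F. partial_computable F \<Longrightarrow> \<exists>q. \<forall>p. U (q @ p) = F p"
    unfolding universal_def by auto
  obtain fU where fU: "\<And>x y. U x = Some y \<longleftrightarrow> eval fU [enc x] (enc y)"
    using pcU unfolding partial_computable_def by blast
  define cv where "cv z = (U (dec z) \<noteq> None)" for z
  define uo where "uo z = enc (the (U (dec z)))" for z
  have Uev: "eval fU [z] (uo z)" if "cv z" for z
  proof -
    from that obtain y where "U (dec z) = Some y" unfolding cv_def by auto
    thus ?thesis using fU[of "dec z" y] unfolding uo_def by simp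
  qed
  have "partial_computable (\<lambda>p. Some [])" unfolding partial_computable_def
  proof (intro exI[of _ Z] allI)
    fix x y
    show "(Some [] = Some y) = eval Z [enc x] (enc y)"
    proof
      assume "Some [] = Some y" thus "eval Z [enc x] (enc y)" using eval_Z[of "[enc x]"] by auto
    next
      assume "eval Z [enc x] (enc y)" thus "Some [] = Some y" by (rule ZE) simp
    qed
  qed
  then obtain q0 where q0: "\<forall>p. U (q0 @ p) = Some []" using univ by blast
  hence Uq0: "U q0 = Some []" by (metis append_Nil2)
  define e where "e = enc q0"
  have cve: "cv e" and uoe: "uo e = 0" using Uq0 by (auto simp: cv_def uo_def e_def)
  have "partial_computable (\<lambda>p. Some p)" unfolding partial_computable_def
  proof (intro exI[of _ "Proj 0"] allI)
    fix x y
    show "(Some x = Some y) = eval (Proj 0) [enc x] (enc y)"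
    proof
      assume "Some x = Some y" thus "eval (Proj 0) [enc x] (enc y)" by (auto intro: evalProj)
    next
      assume "eval (Proj 0) [enc x] (enc y)" thus "Some x = Some y" by (rule ProjE) (simp add: enc_inj)
    qed
  qed
  then obtain qid where qid: "\<forall>p. U (qid @ p) = Some p" using univ by blast
  have KCex: "\<exists>p. length p = KC U x \<and> U p = Some x" for x
    unfolding KC_def by (rule LeastI_ex) (use qid in blast)
  have KCle: "KC U x \<le> length p" if "U p = Some x" for x p
    unfolding KC_def by (rule Least_le) (use that in blast)
  define D where "D x = (if \<exists>v. eval (Dr fU e) [enc x] v
      then Some (dec (THE v. eval (Dr fU e) [enc x] v)) else None)" for x
  have Dthe: "eval (Dr fU e) [enc x] v \<Longrightarrow> (THE v. eval (Dr fU e) [enc x] v) = v" for x v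
    by (rule the_equality) (auto intro: eval_det)
  have "partial_computable D" unfolding partial_computable_def
  proof (intro exI[of _ "Dr fU e"] allI)
    fix x y
    show "(D x = Some y) = eval (Dr fU e) [enc x] (enc y)"
    proof
      assume "D x = Some y"
      then obtain v where v: "eval (Dr fU e) [enc x] v" "y = dec v"
        unfolding D_def by (auto split: if_splits simp: Dthe)
      thus "eval (Dr fU e) [enc x] (enc y)" by simp
    next
      assume "eval (Dr fU e) [enc x] (enc y)"
      thus "D x = Some y" unfolding D_def using Dthe by auto
    qed
  qed
  then obtain qD where qD: "\<forall>p. U (qD @ p) = D p" using univ by blast
  define S3 where "S3 = {x. \<exists>p. length p < 3 \<and> U p = Some x}"
  have "S3 \<subseteq> (\<lambda>p. the (U p)) ` {p. set p \<subseteq> UNIV \<and> length p \<le> 2}"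
  proof
    fix x assume "x \<in> S3"
    then obtain p where "length p < 3" "U p = Some x" unfolding S3_def by auto
    thus "x \<in> (\<lambda>p. the (U p)) ` {p. set p \<subseteq> UNIV \<and> length p \<le> 2}"
      by (intro image_eqI[of _ _ p]) auto
  qed
  moreover have "finite {p::bool list. set p \<subseteq> UNIV \<and> length p \<le> 2}"
    by (rule finite_lists_length_le) simp
  ultimately have "finite S3" by (meson finite_imageI finite_subset)
  hence "finite (length ` S3)" by simp
  then obtain m where m0: "\<forall>k\<in>length ` S3. k \<le> m"
    using finite_nat_set_iff_bounded_le by meson
  hence m: "\<forall>x\<in>S3. length x \<le> m" by simp
  define B where "B = length qD + 4 * length qid + 3"
  show ?thesis
  proof (intro exI[of _ "[:real B, 4:]"] exI[of _ "Suc m"] allI impI)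
    fix n \<alpha> xs
    assume n: "Suc m \<le> n" and al: "real_of_int \<alpha> > 7 * log 2 (real n) + 6"
      and len: "\<forall>x\<in>set xs. length x = n" and mi: "mutually_independent U \<alpha> xs"
    define t where "t = length xs"
    define Pg where "Pg i = (SOME p. length p = KC U (xs!i) \<and> U p = Some (xs!i))" for i
    have Pg: "length (Pg i) = KC U (xs!i) \<and> U (Pg i) = Some (xs!i)" for i
      using someI_ex[OF KCex] unfolding Pg_def by blast
    have lenx: "length (xs ! i) = n" if "i < t" for i using len that unfolding t_def by auto
    have Pg3: "3 \<le> length (Pg i)" if "i < t" for i
    proof (rule ccontr)
      assume "\<not> 3 \<le> length (Pg i)"
      hence "xs ! i \<in> S3" using Pg[of i] unfolding S3_def by (auto intro!: exI[of _ "Pg i"])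
      thus False using m lenx[OF that] n by auto
    qed
    have Pgle: "length (Pg i) \<le> n + length qid" if "i < t" for i
      using KCle[of "qid @ xs ! i" "xs ! i"] qid Pg[of i] lenx[OF that] by simp
    define key where "key i = 4 * length (Pg i) + jv (Pg i)" for i
    define R where "R i = drop 2 (Pg i)" for i
    define X where "X i = xs ! i" for i
    define L where "L = sort_key key [0..<t]"
    have Lset: "set L = {..<t}" and Ldist: "distinct L" and Llen: "length L = t"
      and Lsort: "sorted (map key L)"
      unfolding L_def by (auto simp: sorted_sort_key)
    define b where "b = build 0 key R L"
    define y where "y = concat (map X L)"
    interpret M: mach fU e uo cv "enc b" using Uev cve uoe by unfold_locales auto
    have "M.Reach 0 (enc (build 0 key R L @ []), 0, 0, 0, 0, 1)"
      using M.Reach0 by (simp add: b_def)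
    moreover have items: "length (Pg i) \<ge> 3 \<and> cv (enc (Pg i)) \<and> uo (enc (Pg i)) = enc (X i)"
      if "i \<in> set L" for i
      using that Lset Pg3[of i] Pg[of i] by (auto simp: cv_def uo_def X_def simp del: KC_def)
    ultimately obtain c p where
      "M.Reach (0 + length (build 0 key R L)) (enc [], c, 0, p, 0 + 1 * enc y, 1 * 2 ^ length y)"
      using M.Reach_build[of L Pg X key R 0 0 "[]" 0 0 1] Lsort key_def R_def y_def by fastforce
    hence "M.Reach (length b) (0, c, 0, p, enc y, 2 ^ length y)" by (simp add: b_def)
    from M.Reach_noop[OF this, of "enc b - length b"]
    have "M.Reach (enc b) (0, c, 0, p, enc y, 2 ^ length y)" using enc_ge_len[of b] by simp
    from M.Reach_Dr[OF this] have ev: "eval (Dr fU e) [enc b] (enc y)" .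
    hence "D b = Some y" unfolding D_def using Dthe by auto
    hence "U (qD @ b) = Some y" using qD by simp
    hence KCy: "KC U y \<le> length qD + length b" using KCle by fastforce
    have keyle: "key i \<le> 4 * (n + length qid) + 3" if "i \<in> set L" for i
      using Pgle[of i] that Lset jv_le[of "Pg i"] unfolding key_def by auto
    have blen: "length b + 0 \<le> 4 * (n + length qid) + 3 + sum_list (map (\<lambda>i. 1 + length (R i)) L)"
      unfolding b_def using keyle Lsort by (intro build_len) auto
    have "sum_list (map (\<lambda>i. 1 + length (R i)) L) = (\<Sum>i<t. 1 + length (R i))"
      using sum_list_distinct_conv_sum_set[OF Ldist] Lset by simp
    moreover have "(\<Sum>i<t. 1 + length (R i)) + t = (\<Sum>i<t. length (Pg i))"
    proof -
      have "(\<Sum>i<t. 1 + length (R i)) + t = (\<Sum>i<t. 1 + length (R i) + 1)"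
        by (simp only: sum.distrib) simp
      also have "\<dots> = (\<Sum>i<t. length (Pg i))"
      proof (rule sum.cong)
        fix i assume "i \<in> {..<t}"
        hence "3 \<le> length (Pg i)" using Pg3 by auto
        thus "1 + length (R i) + 1 = length (Pg i)" by (simp add: R_def)
      qed simp
      finally show ?thesis .
    qed
    ultimately have blen2: "length b + t \<le> 4 * (n + length qid) + 3 + (\<Sum>i<t. length (Pg i))"
      using blen by linarith
    have bij: "bij_betw ((!) L) {..<length xs} {..<length xs}"
      using bij_betw_nth[OF Ldist] Llen Lset unfolding t_def by simp
    have "map (\<lambda>i. xs ! (L ! i)) [0..<length xs] = map X L"
      by (rule nth_equalityI) (auto simp: X_def Llen t_def)
    hence "concat (map (\<lambda>i. xs ! ((!) L i)) [0..<length xs]) = y" by (simp add: y_def)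
    with mi bij have ind: "int (KC U y) \<ge> (\<Sum>i<length xs. int (KC U (xs ! i))) - \<alpha>"
      unfolding mutually_independent_def by metis
    have "(\<Sum>i<length xs. int (KC U (xs ! i))) = int (\<Sum>i<t. length (Pg i))"
      unfolding t_def using Pg by (simp add: of_nat_sum)
    moreover have h1: "int (KC U y) \<le> int (length qD) + int (length b)" using KCy by simp
    moreover have h2: "int (length b) + int t \<le> 4 * (int n + int (length qid)) + 3 + int (\<Sum>i<t. length (Pg i))"
      using blen2 by (simp only: of_nat_add[symmetric] of_nat_le_iff)
    ultimately have ti: "int t \<le> \<alpha> + int B + 4 * int n"
      using ind unfolding B_def by simp
    have "0 \<le> log 2 (real n)" using n by simp
    hence a0: "0 \<le> \<alpha>" using al by linarith
    have pw: "2 powr real_of_int \<alpha> = 2 ^ nat \<alpha>"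
      using a0 by (metis of_nat_nat powr_realpow zero_less_numeral)
    have "real t \<le> real_of_int \<alpha> + real B + 4 * real n" using ti by linarith
    also have "\<dots> \<le> (real B + 4 * real n) * (1 + real (nat \<alpha>))"
    proof -
      have "real_of_int \<alpha> \<le> (real B + 4 * real n) * real (nat \<alpha>)"
        using a0 by (simp add: B_def algebra_simps)
      thus ?thesis by (simp add: algebra_simps)
    qed
    also have "\<dots> \<le> (real B + 4 * real n) * 2 ^ nat \<alpha>"
      by (rule mult_left_mono[OF pow2_ge]) simp
    finally show "real (length xs) \<le> poly [:real B, 4:] (real n) * 2 powr real_of_int \<alpha>"
      unfolding pw t_def by (simp add: algebra_simps)
  qed
qed


end
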